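(* For a word $w=w_1\cdots w_n$ over $\{1,2,3\}$ let $s(w)=|\{i : 1\le i\le n-2,\ w_{i+2}-w_i=2\}|$. Then for all $n\ge 0$ and $s\ge 0$, the number of words $w\in\{1,2,3\}^{2n}$ with $s(w)=s$ equals $$\sum_{r=0}^{n}\sum_{m=0}^{r}(-1)^{m+r+s}\binom{m+r}{2m}\binom{n-m}{s}9^{m},$$ and the number of words $w\in\{1,2,3\}^{2n+1}$ with $s(w)=s$ equals $$\sum_{r=0}^{n}\sum_{m=0}^{r}(-1)^{m+r+s}\binom{m+r+1}{2m+1}\binom{n-m}{s}3^{2m+1}.$$ *)

theory Defs
  imports Main
begin

text \<open>Words over the alphabet {1,2,3}, represented as lists of naturals (0-indexed).
  The statistic counts positions i (1-based: 1 <= i <= n-2) with w_{i+2} - w_i = 2.\<close>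

definition s_stat :: "nat list \<Rightarrow> nat" where
  "s_stat w = card {i. i + 2 < length w \<and> int (w ! (i + 2)) - int (w ! i) = 2}"

definition words :: "nat \<Rightarrow> nat list set" where
  "words n = {w. length w = n \<and> set w \<subseteq> {1, 2, 3}}"

end

theory Submission
  imports Defs "HOL-Computational_Algebra.Polynomial"
begin

lemma s_stat_short: "length w < 3 \<Longrightarrow> s_stat w = 0"
  unfolding s_stat_def by simp

lemma s_stat_Cons:
  "s_stat (a # b # c # w) = (if c = a + 2 then 1 else 0) + s_stat (b # c # w)"
proof -
  define P where "P = (\<lambda>(u::nat list) i. i + 2 < length u \<and> int (u ! (i + 2)) - int (u ! i) = 2)"
  have eq: "{i. P (a # b # c # w) i} = (if c = a + 2 then {0} else {}) \<union> Suc ` {i. P (b # c # w) i}"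
  proof (rule set_eqI)
    fix i show "i \<in> {i. P (a # b # c # w) i} \<longleftrightarrow> i \<in> (if c = a + 2 then {0} else {}) \<union> Suc ` {i. P (b # c # w) i}"
      by (cases i) (auto simp: P_def)
  qed
  have fin: "finite {i. P (b # c # w) i}" unfolding P_def by auto
  have "card {i. P (a # b # c # w) i} = (if c = a + 2 then 1 else 0) + card {i. P (b # c # w) i}"
    unfolding eq using fin by (auto simp: card_image)
  then show ?thesis unfolding s_stat_def P_def by simp
qed

lemma words_alt: "words L = {xs. set xs \<subseteq> {1,2,3} \<and> length xs = L}"
  unfolding words_def by auto

lemma finite_words: "finite (words L)"
  unfolding words_alt by (rule finite_lists_length_eq) simp

lemma words_Suc: "words (Suc L) = (\<Union>c\<in>{1,2,3}. Cons c ` words L)"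
  unfolding words_def by (auto simp: length_Suc_conv)

lemma sum_words_Suc:
  "(\<Sum>w\<in>words (Suc L). F w) = (\<Sum>c\<in>{1,2,3::nat}. \<Sum>w\<in>words L. F (c # w))"
proof -
  have "(\<Sum>w\<in>words (Suc L). F w) = (\<Sum>c\<in>{1,2,3::nat}. \<Sum>w\<in>Cons c ` words L. F w)"
    unfolding words_Suc
    by (rule sum.UNION_disjoint) (auto simp: finite_words)
  also have "\<dots> = (\<Sum>c\<in>{1,2,3::nat}. \<Sum>w\<in>words L. F (c # w))"
    by (rule sum.cong) (auto simp: sum.reindex)
  finally show ?thesis .
qed

lemma words_0: "words 0 = {[]}" unfolding words_def by auto

definition X :: "int poly" where "X = [:0, 1:]"
definition qq :: "int poly" where "qq = 1 - X"

fun f :: "nat \<Rightarrow> nat \<Rightarrow> int poly" where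
  "f 0 a = 1"
| "f (Suc k) a = (\<Sum>c\<in>{1,2,3}. (if c = a + 2 then X else 1) * f k c)"

fun T :: "nat \<Rightarrow> int poly" where
  "T 0 = 1"
| "T (Suc 0) = 3"
| "T (Suc (Suc n)) = 3 * T (Suc n) - qq * T n"

lemma monom_if: "monom (1::int) (if P then 1 else 0) = (if P then X else 1)"
  by (simp add: X_def monom_Suc monom_0 one_pCons)

lemma monom_add: "monom (1::int) (m + n) = monom 1 m * monom 1 n"
  by (simp add: mult_monom)

lemma key:
  "(\<Sum>w\<in>words L. monom (1::int) (s_stat (a # b # w))) = f ((L + 1) div 2) a * f (L div 2) b"
proof (induction L arbitrary: a b)
  case 0
  then show ?case by (simp add: words_0 s_stat_short)
next
  case (Suc L)
  have "(\<Sum>w\<in>words (Suc L). monom (1::int) (s_stat (a # b # w)))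
      = (\<Sum>c\<in>{1,2,3::nat}. \<Sum>w\<in>words L. (if c = a + 2 then X else 1) * monom 1 (s_stat (b # c # w)))"
    by (simp only: sum_words_Suc s_stat_Cons monom_add monom_if)
  also have "\<dots> = (\<Sum>c\<in>{1,2,3::nat}. (if c = a + 2 then X else 1) * (f ((L + 1) div 2) b * f (L div 2) c))"
    by (simp only: sum_distrib_left[symmetric] Suc.IH)
  also have "\<dots> = f ((L + 1) div 2) b * f (Suc (L div 2)) a"
    by (simp only: f.simps sum_distrib_left mult_ac)
  also have "Suc (L div 2) = (Suc L + 1) div 2" by simp
  also have "(L + 1) div 2 = Suc L div 2" by simp
  finally show ?case by (simp only: mult.commute)
qed

lemma fT: "f k 2 = T k \<and> f k 3 = T k \<and> f k 1 + f k 2 + f k 3 = T (Suc k)"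
proof (induction k)
  case 0
  then show ?case by simp
next
  case (Suc k)
  have a: "f (Suc k) 2 = T (Suc k)" "f (Suc k) 3 = T (Suc k)" using Suc by simp_all
  have "f (Suc k) 1 = f k 1 + f k 2 + X * f k 3" by simp
  then have "f (Suc k) 1 + f (Suc k) 2 + f (Suc k) 3 = 3 * T (Suc k) - qq * T k"
    using Suc a by (simp add: qq_def algebra_simps)
  then show ?case using a by simp
qed

definition G :: "nat \<Rightarrow> int poly" where
  "G L = (\<Sum>w\<in>words L. monom 1 (s_stat w))"

lemma G_T: "G L = T ((L + 1) div 2) * T (L div 2)"
proof -
  consider "L = 0" | "L = 1" | L' where "L = Suc (Suc L')"
    by (metis One_nat_def not0_implies_Suc)
  then show ?thesis
  proof cases
    case 1 then show ?thesis by (simp add: G_def words_0 s_stat_short)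
  next
    case 2
    have "words 1 = {[1],[2],[3]}" unfolding words_def by (auto simp: length_Suc_conv)
    then show ?thesis using 2 by (simp add: G_def s_stat_short monom_0 numeral_3_eq_3 numeral_poly)
  next
    case 3
    have "G L = (\<Sum>a\<in>{1,2,3::nat}. \<Sum>b\<in>{1,2,3::nat}. f ((L' + 1) div 2) a * f (L' div 2) b)"
      unfolding G_def 3 by (simp only: sum_words_Suc key)
    also have "\<dots> = (f ((L' + 1) div 2) 1 + f ((L' + 1) div 2) 2 + f ((L' + 1) div 2) 3)
       * (f (L' div 2) 1 + f (L' div 2) 2 + f (L' div 2) 3)"
      by (simp add: algebra_simps)
    also have "\<dots> = T (Suc ((L' + 1) div 2)) * T (Suc (L' div 2))"
      by (simp only: fT[THEN conjunct2, THEN conjunct2])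
    finally show ?thesis using 3 by simp
  qed
qed

lemma card_coeff: "int (card {w \<in> words L. s_stat w = s}) = coeff (G L) s"
proof -
  have "coeff (G L) s = (\<Sum>w\<in>words L. if s_stat w = s then 1 else 0)"
    unfolding G_def coeff_sum by simp
  also have "\<dots> = int (card {w \<in> words L. s_stat w = s})"
    by (simp add: sum.If_cases finite_words Int_def)
  finally show ?thesis by simp
qed

definition Uc :: "nat \<Rightarrow> nat \<Rightarrow> int" where
  "Uc r m = (-1) ^ (m + r) * int ((m + r) choose (2 * m)) * 9 ^ m"
definition Vc :: "nat \<Rightarrow> nat \<Rightarrow> int" where
  "Vc r m = (-1) ^ (m + r) * int ((m + r + 1) choose (2 * m + 1)) * 3 ^ (2 * m + 1)"
definition U :: "nat \<Rightarrow> int poly" where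
  "U r = (\<Sum>m\<le>r. smult (Uc r m) (qq ^ (r - m)))"
definition V :: "nat \<Rightarrow> int poly" where
  "V r = (\<Sum>m\<le>r. smult (Vc r m) (qq ^ (r - m)))"

lemma Uc_zero: "r < m \<Longrightarrow> Uc r m = 0"
  unfolding Uc_def by simp
lemma Vc_zero: "r < m \<Longrightarrow> Vc r m = 0"
  unfolding Vc_def by (simp add: binomial_eq_0 del: binomial_Suc_Suc)

lemma qq_ext:
  assumes "\<And>m. r < m \<Longrightarrow> c m = 0"
  shows "qq * (\<Sum>m\<le>r. smult (c m) (qq ^ (r - m))) = (\<Sum>m\<le>Suc r. smult (c m) (qq ^ (Suc r - m)))"
proof -
  have "qq * (\<Sum>m\<le>r. smult (c m) (qq ^ (r - m))) = (\<Sum>m\<le>r. smult (c m) (qq ^ (Suc r - m)))"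
    unfolding sum_distrib_left
    by (rule sum.cong) (auto simp: Suc_diff_le)
  then show ?thesis using assms by simp
qed

lemma three_smult: "(3::int poly) * smult c p = smult (3 * c) p"
  by (simp add: numeral_poly mult.commute)

lemma three_sum: "(3::int poly) * (\<Sum>m\<in>A. smult (c m) (p m)) = (\<Sum>m\<in>A. smult (3 * c m) (p m))"
  by (simp only: sum_distrib_left three_smult)

lemma comb_sum:
  fixes a b c :: "nat \<Rightarrow> int"
  assumes "\<And>m. m \<in> A \<Longrightarrow> a m = b m - c m"
  shows "(\<Sum>m\<in>A. smult (a m) (p m)) = (\<Sum>m\<in>A. smult (b m) (p m)) - (\<Sum>m\<in>A. smult (c m) (p m))"
  proof -
  have "(\<Sum>m\<in>A. smult (a m) (p m)) = (\<Sum>m\<in>A. smult (b m - c m) (p m))"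
    by (rule sum.cong) (simp_all add: assms)
  then show ?thesis by (simp only: smult_diff_left sum_subtractf)
qed

lemma Uc_rec: "Uc (Suc r) (Suc m) = 3 * Vc r m - Uc r (Suc m)"
proof -
  have b: "(Suc m + Suc r) choose (2 * Suc m) = ((m + r + 1) choose (2 * m + 1)) + ((Suc m + r) choose (2 * Suc m))"
  proof -
    have "Suc m + Suc r = Suc (Suc (m + r))" "2 * Suc m = Suc (Suc (2 * m))" "Suc m + r = Suc (m + r)" by simp_all
    then show ?thesis by (simp only: binomial_Suc_Suc) simp
  qed
  have s1: "(-1::int) ^ (Suc m + Suc r) = (-1) ^ (m + r)" by simp
  have s2: "(-1::int) ^ (Suc m + r) = - ((-1) ^ (m + r))" by simp
  have p: "(9::int) ^ Suc m = 3 * 3 ^ (2 * m + 1)" by (simp add: power_mult)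
  show ?thesis unfolding Uc_def Vc_def b s1 s2 p by (simp add: algebra_simps)
qed

lemma Vc_rec: "Vc (Suc r) m = 3 * Uc (Suc r) m - Vc r m"
proof -
  have b: "(m + Suc r + 1) choose (2 * m + 1) = ((m + Suc r) choose (2 * m)) + ((m + r + 1) choose (2 * m + 1))"
  proof -
    have "m + Suc r + 1 = Suc (m + r + 1)" "2 * m + 1 = Suc (2 * m)" "m + Suc r = m + r + 1" by simp_all
    then show ?thesis by (simp only: binomial_Suc_Suc)
  qed
  have s1: "(-1::int) ^ (m + Suc r) = - ((-1) ^ (m + r))" by simp
  have p: "(3::int) ^ (2 * m + 1) = 3 * 9 ^ m" by (simp add: power_mult)
  show ?thesis unfolding Vc_def Uc_def b s1 p by (simp add: algebra_simps)
qed

lemma UA: "U (Suc r) = 3 * V r - qq * U r"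
proof -
  have "U (Suc r) = smult (Uc (Suc r) 0) (qq ^ Suc r) + (\<Sum>m\<le>r. smult (Uc (Suc r) (Suc m)) (qq ^ (r - m)))"
    unfolding U_def by (subst sum.atMost_Suc_shift) simp
  also have "(\<Sum>m\<le>r. smult (Uc (Suc r) (Suc m)) (qq ^ (r - m)))
     = (\<Sum>m\<le>r. smult (3 * Vc r m) (qq ^ (r - m))) - (\<Sum>m\<le>r. smult (Uc r (Suc m)) (qq ^ (r - m)))"
    by (rule comb_sum) (rule Uc_rec)
  also have "(\<Sum>m\<le>r. smult (3 * Vc r m) (qq ^ (r - m))) = 3 * V r"
    unfolding V_def three_sum ..
  also have "qq * U r = smult (Uc r 0) (qq ^ Suc r) + (\<Sum>m\<le>r. smult (Uc r (Suc m)) (qq ^ (r - m)))"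
    unfolding U_def by (subst qq_ext, simp add: Uc_zero) (subst sum.atMost_Suc_shift, simp)
  moreover have "Uc (Suc r) 0 = - Uc r 0" unfolding Uc_def by simp
  ultimately show ?thesis by (simp add: algebra_simps)
qed

lemma VB: "V (Suc r) = 3 * U (Suc r) - qq * V r"
proof -
  have "V (Suc r) = (\<Sum>m\<le>Suc r. smult (3 * Uc (Suc r) m) (qq ^ (Suc r - m))) - (\<Sum>m\<le>Suc r. smult (Vc r m) (qq ^ (Suc r - m)))"
    unfolding V_def by (rule comb_sum) (rule Vc_rec)
  also have "(\<Sum>m\<le>Suc r. smult (3 * Uc (Suc r) m) (qq ^ (Suc r - m))) = 3 * U (Suc r)"
    unfolding U_def three_sum ..
  also have "(\<Sum>m\<le>Suc r. smult (Vc r m) (qq ^ (Suc r - m))) = qq * V r"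
    unfolding V_def by (rule qq_ext[symmetric]) (rule Vc_zero)
  finally show ?thesis .
qed

lemma TUV: "T (2 * r) = U r \<and> T (2 * r + 1) = V r"
proof (induction r)
  case 0
  then show ?case by (simp add: U_def V_def Uc_def Vc_def numeral_poly)
next
  case (Suc r)
  have a: "T (2 * Suc r) = U (Suc r)"
  proof -
    have "T (2 * Suc r) = 3 * T (Suc (2 * r)) - qq * T (2 * r)"
      by (simp del: T.simps(3) add: T.simps(3)[symmetric])
    then show ?thesis using Suc UA by simp
  qed
  have "T (2 * Suc r + 1) = 3 * T (2 * Suc r) - qq * T (Suc (2 * r))"
    by (simp del: T.simps(3) add: T.simps(3)[symmetric])
  then have "T (2 * Suc r + 1) = V (Suc r)" using Suc a VB by simp
  then show ?case using a by simp
qed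

lemma T_rec: "T (n + 2) = 3 * T (n + 1) - qq * T n"
  by (simp add: numeral_2_eq_2)

declare T.simps(3)[simp del]

lemma doubling:
  "T (2 * r + 2) = T (r + 1) * T (r + 1) - qq * (T r * T r) \<and>
   T (2 * r + 3) = T (r + 2) * T (r + 1) - qq * (T (r + 1) * T r)"
proof (induction r)
  case 0
  have t2: "T 2 = 3 * 3 - qq" by (simp add: numeral_2_eq_2 T.simps(3))
  have t3: "T 3 = 3 * T 2 - qq * 3" using T_rec[of 1] by (simp add: numeral_3_eq_3 numeral_2_eq_2)
  show ?case using t2 t3 by (simp add: algebra_simps numeral_2_eq_2 numeral_3_eq_3)
next
  case (Suc r)
  define A where "A = T r"
  define B where "B = T (r + 1)"
  define C where "C = T (r + 2)"
  define D where "D = T (r + 3)"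
  have hC: "C = 3 * B - qq * A" unfolding A_def B_def C_def using T_rec[of r] by simp
  have hD: "D = 3 * C - qq * B" unfolding D_def B_def C_def using T_rec[of "r + 1"]
    by (simp add: numeral_3_eq_3 numeral_2_eq_2)
  have e1: "T (2 * r + 2) = B * B - qq * (A * A)" using Suc A_def B_def by simp
  have e2: "T (2 * r + 3) = C * B - qq * (B * A)" using Suc A_def B_def C_def by simp
  have e4: "T (2 * Suc r + 2) = 3 * T (2 * r + 3) - qq * T (2 * r + 2)"
    using T_rec[of "2 * r + 2"] by (simp add: numeral_3_eq_3 numeral_2_eq_2)
  have e5: "T (2 * Suc r + 3) = 3 * T (2 * Suc r + 2) - qq * T (2 * r + 3)"
    using T_rec[of "2 * r + 3"] by (simp add: numeral_3_eq_3 numeral_2_eq_2)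
  have g1: "T (2 * Suc r + 2) = C * C - qq * (B * B)"
    unfolding e4 e1 e2 hC by (simp add: algebra_simps)
  have g2: "T (2 * Suc r + 3) = D * C - qq * (C * B)"
    unfolding e5 g1 e2 hD hC by (simp add: algebra_simps)
  have "T (Suc r + 1) = C" "T (Suc r) = B" "T (Suc r + 2) = D"
    unfolding B_def C_def D_def by (simp_all add: numeral_3_eq_3 numeral_2_eq_2)
  then show ?case using g1 g2 by simp
qed

lemma shift_sum:
  "(\<Sum>r\<le>Suc n. qq ^ (Suc n - r) * F r) = qq * (\<Sum>r\<le>n. qq ^ (n - r) * F r) + F (Suc n)"
proof -
  have "(\<Sum>r\<le>n. qq ^ (Suc n - r) * F r) = (\<Sum>r\<le>n. qq * (qq ^ (n - r) * F r))"
    by (rule sum.cong) (simp_all add: Suc_diff_le mult.assoc)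
  then show ?thesis by (simp add: sum_distrib_left)
qed

lemma sq_sum:
  "T n * T n = (\<Sum>r\<le>n. qq ^ (n - r) * T (2 * r)) \<and>
   T (n + 1) * T n = (\<Sum>r\<le>n. qq ^ (n - r) * T (2 * r + 1))"
proof (induction n)
  case 0
  then show ?case by simp
next
  case (Suc n)
  have s1: "(\<Sum>r\<le>Suc n. qq ^ (Suc n - r) * T (2 * r)) = qq * (T n * T n) + T (2 * n + 2)"
    using shift_sum[of n "\<lambda>r. T (2 * r)"] Suc by simp
  have s2: "(\<Sum>r\<le>Suc n. qq ^ (Suc n - r) * T (2 * r + 1)) = qq * (T (n + 1) * T n) + T (2 * n + 3)"
    using shift_sum[of n "\<lambda>r. T (2 * r + 1)"] Suc by (simp add: numeral_3_eq_3)
  have d: "T (2 * n + 2) = T (n + 1) * T (n + 1) - qq * (T n * T n)"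
          "T (2 * n + 3) = T (n + 2) * T (n + 1) - qq * (T (n + 1) * T n)"
    using doubling[of n] by simp_all
  have "T (Suc n) * T (Suc n) = (\<Sum>r\<le>Suc n. qq ^ (Suc n - r) * T (2 * r))"
    unfolding s1 d by simp
  moreover have "T (Suc n + 1) * T (Suc n) = (\<Sum>r\<le>Suc n. qq ^ (Suc n - r) * T (2 * r + 1))"
    unfolding s2 d by (simp add: numeral_2_eq_2)
  ultimately show ?case by blast
qed

lemma qq_mult: "qq * p = p - pCons 0 p"
  by (simp add: qq_def X_def algebra_simps)

lemma coeff_qq_pow: "coeff (qq ^ k) s = (-1) ^ s * int (k choose s)"
proof (induction k arbitrary: s)
  case 0
  then show ?case by (simp add: coeff_1)
next
  case (Suc k)
  show ?case
  proof (cases s)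
    case 0
    then show ?thesis using Suc by (simp add: qq_mult)
  next
    case (Suc s')
    then show ?thesis using Suc.IH by (simp add: qq_mult algebra_simps)
  qed
qed

lemma coeff_double:
  "coeff (\<Sum>r\<le>n. qq ^ (n - r) * (\<Sum>m\<le>r. smult (c r m) (qq ^ (r - m)))) s
   = (\<Sum>r\<le>n. \<Sum>m\<le>r. c r m * ((-1) ^ s * int ((n - m) choose s)))"
  unfolding coeff_sum sum_distrib_left
proof (rule sum.cong[OF refl], rule sum.cong[OF refl])
  fix r m assume r: "r \<in> {..n}" and m: "m \<in> {..r}"
  have "qq ^ (n - r) * smult (c r m) (qq ^ (r - m)) = smult (c r m) (qq ^ (n - m))"
  proof -
    have "n - m = (n - r) + (r - m)" using r m by simp
    then show ?thesis by (simp add: power_add)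
  qed
  then show "coeff (qq ^ (n - r) * smult (c r m) (qq ^ (r - m))) s = c r m * ((-1) ^ s * int ((n - m) choose s))"
    by (simp add: coeff_qq_pow)
qed

theorem mainTheorem4:
  fixes n s :: nat
  shows "(int (card {w \<in> words (2 * n). s_stat w = s}) =
           (\<Sum>r = 0..n. \<Sum>m = 0..r. (-1) ^ (m + r + s) * int ((m + r) choose (2 * m))
               * int ((n - m) choose s) * 9 ^ m) \<and>
         int (card {w \<in> words (2 * n + 1). s_stat w = s}) =
           (\<Sum>r = 0..n. \<Sum>m = 0..r. (-1) ^ (m + r + s) * int ((m + r + 1) choose (2 * m + 1))
               * int ((n - m) choose s) * 3 ^ (2 * m + 1)))"
proof
  have "int (card {w \<in> words (2 * n). s_stat w = s}) = coeff (T n * T n) s"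
    unfolding card_coeff G_T by simp
  also have "T n * T n = (\<Sum>r\<le>n. qq ^ (n - r) * U r)"
    using sq_sum[of n] TUV by simp
  also have "coeff \<dots> s = (\<Sum>r\<le>n. \<Sum>m\<le>r. Uc r m * ((-1) ^ s * int ((n - m) choose s)))"
    unfolding U_def by (rule coeff_double)
  also have "\<dots> = (\<Sum>r = 0..n. \<Sum>m = 0..r. (-1) ^ (m + r + s) * int ((m + r) choose (2 * m))
               * int ((n - m) choose s) * 9 ^ m)"
    by (simp add: atLeast0AtMost Uc_def power_add algebra_simps)
  finally show "int (card {w \<in> words (2 * n). s_stat w = s}) = \<dots>" .
next
  have "int (card {w \<in> words (2 * n + 1). s_stat w = s}) = coeff (T (n + 1) * T n) s"
    unfolding card_coeff G_T by simp
  also have "T (n + 1) * T n = (\<Sum>r\<le>n. qq ^ (n - r) * V r)"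
    using sq_sum[of n] TUV by simp
  also have "coeff \<dots> s = (\<Sum>r\<le>n. \<Sum>m\<le>r. Vc r m * ((-1) ^ s * int ((n - m) choose s)))"
    unfolding V_def by (rule coeff_double)
  also have "\<dots> = (\<Sum>r = 0..n. \<Sum>m = 0..r. (-1) ^ (m + r + s) * int ((m + r + 1) choose (2 * m + 1))
               * int ((n - m) choose s) * 3 ^ (2 * m + 1))"
    by (simp add: atLeast0AtMost Vc_def power_add algebra_simps)
  finally show "int (card {w \<in> words (2 * n + 1). s_stat w = s}) = \<dots>" .
qed

end
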